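(* For any complex numbers $a,b,\alpha,\beta,\eta,\xi$ with $\beta a-\alpha b\neq0$ and any natural number $n\ge1$, \[ \sum_{r=0}^{\lfloor n/2\rfloor}\Psi\left(\begin{array}{cc|c} a & b & n \\ \alpha & \beta & r \end{array}\right)\xi^{\lfloor n/2\rfloor-r}\eta^r=\Psi(a\xi-\alpha\eta,\,b\xi-\beta\eta,\,n), \] \[ \sum_{r=0}^{\lfloor (n-1)/2\rfloor}\Phi\left(\begin{array}{cc|c} a & b & n \\ \alpha & \beta & r \end{array}\right)\xi^{\lfloor (n-1)/2\rfloor-r}\eta^r=\Phi(a\xi-\alpha\eta,\,b\xi-\beta\eta,\,n). \]
   Context: $\delta(m)=1$ for $m$ odd, $0$ for $m$ even; $\lfloor\cdot\rfloor$ is the floor. $\Psi(a,b,n)$, $\Phi(a,b,n)$ are defined by $\Psi(a,b,0)=2$, $\Psi(a,b,1)=1$, $\Psi(a,b,n+1)=(2a-b)^{\delta(n)}\Psi(a,b,n)-a\Psi(a,b,n-1)$ and $\Phi(a,b,0)=0$, $\Phi(a,b,1)=1$, $\Phi(a,b,n+1)=(2a-b)^{\delta(n+1)}\Phi(a,b,n)-a\Phi(a,b,n-1)$. For $n\ge1$ and numbers with $\beta a-\alpha b\ne0$, $\Psi\left(\begin{array}{cc|c} a & b & n \\ \alpha & \beta & r \end{array}\right)$ ($0\le r\le\lfloor n/2\rfloor$) and $\Phi\left(\begin{array}{cc|c} a & b & n \\ \alpha & \beta & r \end{array}\right)$ ($0\le r\le\lfloor (n-1)/2\rfloor$) are the unique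 numbers such that, identically in $x,y$, $(\beta a-\alpha b)^{\lfloor n/2\rfloor}\frac{x^n+y^n}{(x+y)^{\delta(n)}}=\sum_{r}\Psi\left(\begin{array}{cc|c} a & b & n \\ \alpha & \beta & r \end{array}\right)(\alpha x^2+\beta xy+\alpha y^2)^{\lfloor n/2\rfloor-r}(ax^2+bxy+ay^2)^r$ and $(\beta a-\alpha b)^{\lfloor (n-1)/2\rfloor}\frac{x^n-y^n}{(x-y)(x+y)^{\delta(n-1)}}=\sum_{r}\Phi\left(\begin{array}{cc|c} a & b & n \\ \alpha & \beta & r \end{array}\right)(\alpha x^2+\beta xy+\alpha y^2)^{\lfloor (n-1)/2\rfloor-r}(ax^2+bxy+ay^2)^r$. *)

theory Defs
  imports Complex_Main
begin

definition delta :: "nat \<Rightarrow> nat" where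
  "delta m = (if odd m then 1 else 0)"

fun Psi :: "complex \<Rightarrow> complex \<Rightarrow> nat \<Rightarrow> complex" where
  "Psi a b 0 = 2"
| "Psi a b (Suc 0) = 1"
| "Psi a b (Suc (Suc n)) = (2*a - b) ^ delta (Suc n) * Psi a b (Suc n) - a * Psi a b n"

fun Phi :: "complex \<Rightarrow> complex \<Rightarrow> nat \<Rightarrow> complex" where
  "Phi a b 0 = 0"
| "Phi a b (Suc 0) = 1"
| "Phi a b (Suc (Suc n)) = (2*a - b) ^ delta (Suc (Suc n)) * Phi a b (Suc n) - a * Phi a b n"

definition PsiC :: "complex \<Rightarrow> complex \<Rightarrow> complex \<Rightarrow> complex \<Rightarrow> nat \<Rightarrow> nat \<Rightarrow> complex" where
  "PsiC a b \<alpha> \<beta> n = (THE c. (\<forall>r. n div 2 < r \<longrightarrow> c r = 0) \<and>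
     (\<forall>x y::complex. (x + y) ^ delta n \<noteq> 0 \<longrightarrow>
        (\<beta>*a - \<alpha>*b) ^ (n div 2) * ((x^n + y^n) / (x + y) ^ delta n)
        = (\<Sum>r=0..n div 2. c r * (\<alpha>*x^2 + \<beta>*x*y + \<alpha>*y^2) ^ (n div 2 - r)
                                  * (a*x^2 + b*x*y + a*y^2) ^ r)))"

definition PhiC :: "complex \<Rightarrow> complex \<Rightarrow> complex \<Rightarrow> complex \<Rightarrow> nat \<Rightarrow> nat \<Rightarrow> complex" where
  "PhiC a b \<alpha> \<beta> n = (THE c. (\<forall>r. (n - 1) div 2 < r \<longrightarrow> c r = 0) \<and>
     (\<forall>x y::complex. (x - y) * (x + y) ^ delta (n - 1) \<noteq> 0 \<longrightarrow>
        (\<beta>*a - \<alpha>*b) ^ ((n - 1) div 2) * ((x^n - y^n) / ((x - y) * (x + y) ^ delta (n - 1)))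
        = (\<Sum>r=0..(n - 1) div 2. c r * (\<alpha>*x^2 + \<beta>*x*y + \<alpha>*y^2) ^ ((n - 1) div 2 - r)
                                  * (a*x^2 + b*x*y + a*y^2) ^ r)))"

end

theory Submission imports Defs begin

definition hom :: "nat \<Rightarrow> (complex \<Rightarrow> complex \<Rightarrow> complex) \<Rightarrow> bool" where
  "hom m f \<longleftrightarrow> (\<exists>c. (\<forall>r. m < r \<longrightarrow> c r = 0) \<and>
     (\<forall>\<xi> \<eta>. f \<xi> \<eta> = (\<Sum>r=0..m. c r * \<xi> ^ (m - r) * \<eta> ^ r)))"

lemma hom_const: "hom 0 (\<lambda>_ _. k)"
  unfolding hom_def by (rule exI[of _ "\<lambda>r. if r = 0 then k else 0"]) auto

lemma hom_diff:
  assumes "hom m f" "hom m g"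
  shows "hom m (\<lambda>\<xi> \<eta>. f \<xi> \<eta> - g \<xi> \<eta>)"
proof -
  obtain c where c: "\<forall>r. m < r \<longrightarrow> c r = 0" "\<forall>\<xi> \<eta>. f \<xi> \<eta> = (\<Sum>r=0..m. c r * \<xi> ^ (m - r) * \<eta> ^ r)"
    using assms(1) unfolding hom_def by blast
  obtain d where d: "\<forall>r. m < r \<longrightarrow> d r = 0" "\<forall>\<xi> \<eta>. g \<xi> \<eta> = (\<Sum>r=0..m. d r * \<xi> ^ (m - r) * \<eta> ^ r)"
    using assms(2) unfolding hom_def by blast
  show ?thesis unfolding hom_def
    by (rule exI[of _ "\<lambda>r. c r - d r"]) (simp add: c d sum_subtractf left_diff_distrib)
qed

lemma hom_mult:
  assumes "hom m f" "\<And>\<xi> \<eta>. g \<xi> \<eta> = (u*\<xi> + v*\<eta>) * f \<xi> \<eta>"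
  shows "hom (Suc m) g"
proof -
  obtain c where c0: "\<forall>r. m < r \<longrightarrow> c r = 0" and cf: "\<forall>\<xi> \<eta>. f \<xi> \<eta> = (\<Sum>r=0..m. c r * \<xi> ^ (m - r) * \<eta> ^ r)"
    using assms(1) unfolding hom_def by blast
  define d where "d r = u * c r + v * (if r = 0 then 0 else c (r - 1))" for r
  show ?thesis unfolding hom_def
  proof (intro exI conjI allI impI)
    show "d r = 0" if "Suc m < r" for r using c0 that by (simp add: d_def)
    fix \<xi> \<eta>
    have 1: "(\<Sum>r=0..Suc m. u * c r * \<xi>^(Suc m - r) * \<eta>^r) = u*\<xi> * (\<Sum>r=0..m. c r * \<xi>^(m-r)*\<eta>^r)"
      using c0 by (simp add: sum.atLeast0_atMost_Suc sum_distrib_left del: sum.cl_ivl_Suc)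
         (rule sum.cong, auto simp: Suc_diff_le mult_ac)
    have 2: "(\<Sum>r=0..Suc m. v * (if r=0 then 0 else c (r-1)) * \<xi>^(Suc m - r) * \<eta>^r)
        = v*\<eta>*(\<Sum>r=0..m. c r * \<xi>^(m-r)*\<eta>^r)"
      by (simp add: sum.atLeast0_atMost_Suc_shift sum_distrib_left mult_ac del: sum.cl_ivl_Suc)
    show "g \<xi> \<eta> = (\<Sum>r=0..Suc m. d r * \<xi>^(Suc m - r) * \<eta>^r)"
      unfolding d_def assms(2) by (simp add: cf distrib_right sum.distrib 1 2 del: sum.cl_ivl_Suc)
  qed
qed

lemma hom_eq: "hom m f \<Longrightarrow> (\<And>\<xi> \<eta>. g \<xi> \<eta> = f \<xi> \<eta>) \<Longrightarrow> hom m g"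
proof -
  assume "hom m f" "\<And>\<xi> \<eta>. g \<xi> \<eta> = f \<xi> \<eta>"
  then have "g = f" by blast
  with \<open>hom m f\<close> show ?thesis by simp
qed

lemma hom_zero: "hom m (\<lambda>_ _. 0)"
  unfolding hom_def by (rule exI[of _ "\<lambda>r. 0"]) auto

lemma psi_hom: "hom (n div 2) (\<lambda>\<xi> \<eta>. Psi (a*\<xi> - \<alpha>*\<eta>) (b*\<xi> - \<beta>*\<eta>) n)"
proof (induction n rule: less_induct)
  case (less n)
  show ?case
  proof (cases n)
    case 0 then show ?thesis using hom_const by simp
  next
    case (Suc n1)
    show ?thesis
    proof (cases n1)
      case 0 then show ?thesis using hom_const Suc by simp
    next
      case (Suc k)
      have n: "n = Suc (Suc k)" using Suc \<open>n = Suc n1\<close> by simp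
      have IH1: "hom (Suc k div 2) (\<lambda>\<xi> \<eta>. Psi (a*\<xi> - \<alpha>*\<eta>) (b*\<xi> - \<beta>*\<eta>) (Suc k))"
        using less n by simp
      have IH0: "hom (k div 2) (\<lambda>\<xi> \<eta>. Psi (a*\<xi> - \<alpha>*\<eta>) (b*\<xi> - \<beta>*\<eta>) k)"
        using less n by simp
      have B: "hom (Suc (k div 2)) (\<lambda>\<xi> \<eta>. (a*\<xi> - \<alpha>*\<eta>) * Psi (a*\<xi> - \<alpha>*\<eta>) (b*\<xi> - \<beta>*\<eta>) k)"
        by (rule hom_mult[OF IH0, of _ a "-\<alpha>"]) simp
      show ?thesis
      proof (cases "even k")
        case True
        have A: "hom (Suc (k div 2)) (\<lambda>\<xi> \<eta>. (2*(a*\<xi> - \<alpha>*\<eta>) - (b*\<xi> - \<beta>*\<eta>)) * Psi (a*\<xi> - \<alpha>*\<eta>) (b*\<xi> - \<beta>*\<eta>) (Suc k))"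
          by (rule hom_mult[of "k div 2" _ _ "2*a-b" "\<beta> - 2*\<alpha>"]) (use IH1 True in simp, algebra)
        show ?thesis unfolding n using hom_diff[OF A B] True by (simp add: delta_def)
      next
        case False
        have "hom (Suc (k div 2)) (\<lambda>\<xi> \<eta>. Psi (a*\<xi> - \<alpha>*\<eta>) (b*\<xi> - \<beta>*\<eta>) (Suc k))"
          using IH1 False by simp
        from hom_diff[OF this B] False show ?thesis unfolding n
          by (simp add: delta_def)
      qed
    qed
  qed
qed

lemma phi_hom: "hom ((n - 1) div 2) (\<lambda>\<xi> \<eta>. Phi (a*\<xi> - \<alpha>*\<eta>) (b*\<xi> - \<beta>*\<eta>) n)"
proof (induction n rule: less_induct)
  case (less n)
  show ?case
  proof (cases n)
    case 0 then show ?thesis using hom_zero by simp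
  next
    case (Suc n1)
    show ?thesis
    proof (cases n1)
      case 0 then show ?thesis using hom_const Suc by simp
    next
      case (Suc k)
      have n: "n = Suc (Suc k)" using Suc \<open>n = Suc n1\<close> by simp
      have IH1: "hom (k div 2) (\<lambda>\<xi> \<eta>. Phi (a*\<xi> - \<alpha>*\<eta>) (b*\<xi> - \<beta>*\<eta>) (Suc k))"
        using less.IH[of "Suc k"] n by simp
      have IH0: "hom ((k - 1) div 2) (\<lambda>\<xi> \<eta>. Phi (a*\<xi> - \<alpha>*\<eta>) (b*\<xi> - \<beta>*\<eta>) k)"
        using less n by simp
      have B: "hom (Suc ((k - 1) div 2)) (\<lambda>\<xi> \<eta>. (a*\<xi> - \<alpha>*\<eta>) * Phi (a*\<xi> - \<alpha>*\<eta>) (b*\<xi> - \<beta>*\<eta>) k)"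
        by (rule hom_mult[OF IH0, of _ a "-\<alpha>"]) simp
      show ?thesis
      proof (cases "k = 0")
        case True
        then show ?thesis unfolding n using hom_const[of 1] by (simp add: delta_def)
      next
        case k0: False
        show ?thesis
        proof (cases "even k")
          case True
          have e: "Suc ((k - 1) div 2) = k div 2" using True k0 by presburger
          show ?thesis unfolding n using hom_diff[OF IH1 B[unfolded e]] True by (simp add: delta_def)
        next
          case False
          have e: "Suc ((k - 1) div 2) = Suc (k div 2)" using False by presburger
          have A: "hom (Suc (k div 2)) (\<lambda>\<xi> \<eta>. (2*(a*\<xi> - \<alpha>*\<eta>) - (b*\<xi> - \<beta>*\<eta>)) * Phi (a*\<xi> - \<alpha>*\<eta>) (b*\<xi> - \<beta>*\<eta>) (Suc k))"
            by (rule hom_mult[of "k div 2" _ _ "2*a-b" "\<beta> - 2*\<alpha>"]) (use IH1 in simp, algebra)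
          show ?thesis unfolding n using hom_diff[OF A B[unfolded e]] False by (simp add: delta_def)
        qed
      qed
    qed
  qed
qed

lemma psi_even_aux0: fixes x y P1 P0 X Y :: complex
  assumes "P1*(x+y) = x*X + y*Y" "P0 = X+Y"
  shows "(2*(x*y) - (-(x^2+y^2))) * P1 - x*y*P0 = x*(x*X)+y*(y*Y)"
proof -
  have "(2*(x*y) - (-(x^2+y^2))) * P1 - x*y*P0 = (x+y)*(P1*(x+y)) - x*y*P0"
    by (simp add: power2_eq_square algebra_simps)
  also have "\<dots> = (x+y)*(x*X + y*Y) - x*y*(X+Y)" using assms by simp
  also have "\<dots> = x*(x*X)+y*(y*Y)" by (simp add: algebra_simps)
  finally show ?thesis .
qed

lemma psi_odd_aux0: fixes x y P1 P0 X Y :: complex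
  assumes "P1 = x*X + y*Y" "P0*(x+y) = X+Y"
  shows "(P1 - x*y*P0)*(x+y) = x*(x*X)+y*(y*Y)"
proof -
  have "(P1 - x*y*P0)*(x+y) = P1*(x+y) - x*y*(P0*(x+y))" by (simp add: algebra_simps)
  also have "\<dots> = (x*X + y*Y)*(x+y) - x*y*(X+Y)" using assms by simp
  also have "\<dots> = x*(x*X)+y*(y*Y)" by (simp add: algebra_simps)
  finally show ?thesis .
qed

lemma phi_even_aux0: fixes x y P1 P0 X Y :: complex
  assumes "P1*(x-y) = x*X - y*Y" "P0*(x-y)*(x+y) = X - Y"
  shows "(P1 - x*y*P0)*(x-y)*(x+y) = x*(x*X) - y*(y*Y)"
proof -
  have "(P1 - x*y*P0)*(x-y)*(x+y) = (P1*(x-y))*(x+y) - x*y*(P0*(x-y)*(x+y))" by (simp add: algebra_simps)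
  also have "\<dots> = (x*X - y*Y)*(x+y) - x*y*(X-Y)" using assms by simp
  also have "\<dots> = x*(x*X) - y*(y*Y)" by (simp add: algebra_simps)
  finally show ?thesis .
qed

lemma phi_odd_aux0: fixes x y P1 P0 X Y :: complex
  assumes "P1*(x-y)*(x+y) = x*X - y*Y" "P0*(x-y) = X - Y"
  shows "((2*(x*y) - (-(x^2+y^2)))*P1 - x*y*P0)*(x-y) = x*(x*X) - y*(y*Y)"
proof -
  have "((2*(x*y) - (-(x^2+y^2)))*P1 - x*y*P0)*(x-y) = (x+y)*(P1*(x-y)*(x+y)) - x*y*(P0*(x-y))"
    by (simp add: power2_eq_square algebra_simps)
  also have "\<dots> = (x+y)*(x*X - y*Y) - x*y*(X-Y)" using assms by simp
  also have "\<dots> = x*(x*X) - y*(y*Y)" by (simp add: algebra_simps)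
  finally show ?thesis .
qed

lemma psi_even_aux: fixes x y P1 P0 :: complex
  shows "P1*(x+y) = x^Suc k + y^Suc k \<Longrightarrow> P0 = x^k+y^k \<Longrightarrow>
  (2*(x*y) - (-(x^2+y^2))) * P1 - x*y*P0 = x^Suc(Suc k)+y^Suc(Suc k)"
  unfolding power_Suc by (rule psi_even_aux0)

lemma psi_odd_aux: fixes x y P1 P0 :: complex
  shows "P1 = x^Suc k + y^Suc k \<Longrightarrow> P0*(x+y) = x^k+y^k \<Longrightarrow>
  (P1 - x*y*P0)*(x+y) = x^Suc(Suc k)+y^Suc(Suc k)"
  unfolding power_Suc by (rule psi_odd_aux0)

lemma phi_even_aux: fixes x y P1 P0 :: complex
  shows "P1*(x-y) = x^Suc k - y^Suc k \<Longrightarrow> P0*(x-y)*(x+y) = x^k - y^k \<Longrightarrow>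
  (P1 - x*y*P0)*(x-y)*(x+y) = x^Suc(Suc k) - y^Suc(Suc k)"
  unfolding power_Suc by (rule phi_even_aux0)

lemma phi_odd_aux: fixes x y P1 P0 :: complex
  shows "P1*(x-y)*(x+y) = x^Suc k - y^Suc k \<Longrightarrow> P0*(x-y) = x^k - y^k \<Longrightarrow>
  ((2*(x*y) - (-(x^2+y^2)))*P1 - x*y*P0)*(x-y) = x^Suc(Suc k) - y^Suc(Suc k)"
  unfolding power_Suc by (rule phi_odd_aux0)

lemma psi_xy: "Psi (x*y) (-(x^2+y^2)) n * (x+y)^delta n = x^n + y^n"
proof (induction n rule: less_induct)
  case (less n)
  show ?case
  proof (cases n)
    case 0 then show ?thesis by (simp add: delta_def)
  next
    case (Suc n1)
    show ?thesis
    proof (cases n1)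
      case 0 then show ?thesis using Suc by (simp add: delta_def)
    next
      case (Suc k)
      have n: "n = Suc (Suc k)" using Suc \<open>n = Suc n1\<close> by simp
      have I1: "Psi (x*y) (-(x^2+y^2)) (Suc k) * (x+y)^delta (Suc k) = x^Suc k + y^Suc k"
        using less.IH[of "Suc k"] n by simp
      have I0: "Psi (x*y) (-(x^2+y^2)) k * (x+y)^delta k = x^k + y^k"
        using less.IH[of k] n by simp
      show ?thesis
      proof (cases "even k")
        case True
        then have I1': "Psi (x*y) (-(x^2+y^2)) (Suc k) * (x+y) = x^Suc k + y^Suc k"
          and I0': "Psi (x*y) (-(x^2+y^2)) k = x^k + y^k" using I1 I0 by (simp_all add: delta_def)
        show ?thesis unfolding n using True psi_even_aux[OF I1' I0'] by (simp add: delta_def)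
      next
        case False
        then have I1': "Psi (x*y) (-(x^2+y^2)) (Suc k) = x^Suc k + y^Suc k"
          and I0': "Psi (x*y) (-(x^2+y^2)) k * (x+y) = x^k + y^k" using I1 I0 by (simp_all add: delta_def)
        show ?thesis unfolding n using False psi_odd_aux[OF I1' I0'] by (simp add: delta_def)
      qed
    qed
  qed
qed

lemma phi_xy: "Phi (x*y) (-(x^2+y^2)) n * (x - y) * (x+y)^delta (n - 1) = x^n - y^n"
proof (induction n rule: less_induct)
  case (less n)
  show ?case
  proof (cases n)
    case 0 then show ?thesis by (simp add: delta_def)
  next
    case (Suc n1)
    show ?thesis
    proof (cases n1)
      case 0 then show ?thesis using Suc by (simp add: delta_def)
    next
      case (Suc k)
      have n: "n = Suc (Suc k)" using Suc \<open>n = Suc n1\<close> by simp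
      have I1: "Phi (x*y) (-(x^2+y^2)) (Suc k) * (x - y) * (x+y)^delta k = x^Suc k - y^Suc k"
        using less.IH[of "Suc k"] n by simp
      have I0: "Phi (x*y) (-(x^2+y^2)) k * (x - y) * (x+y)^delta (k - 1) = x^k - y^k"
        using less.IH[of k] n by simp
      show ?thesis
      proof (cases "k = 0")
        case True
        then show ?thesis unfolding n by (simp add: delta_def power2_eq_square algebra_simps)
      next
        case k0: False
        show ?thesis
        proof (cases "even k")
          case True
          then have "odd (k - 1)" using k0 by presburger
          then have I1': "Phi (x*y) (-(x^2+y^2)) (Suc k) * (x - y) = x^Suc k - y^Suc k"
            and I0': "Phi (x*y) (-(x^2+y^2)) k * (x - y) * (x+y) = x^k - y^k"
            using I1 I0 True by (simp_all add: delta_def)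
          show ?thesis unfolding n using True phi_even_aux[OF I1' I0'] by (simp add: delta_def)
        next
          case False
          then have "even (k - 1)" using k0 by presburger
          then have I1': "Phi (x*y) (-(x^2+y^2)) (Suc k) * (x - y) * (x+y) = x^Suc k - y^Suc k"
            and I0': "Phi (x*y) (-(x^2+y^2)) k * (x - y) = x^k - y^k"
            using I1 I0 False by (simp_all add: delta_def)
          show ?thesis unfolding n using False phi_odd_aux[OF I1' I0'] by (simp add: delta_def)
        qed
      qed
    qed
  qed
qed

lemma psi_scale: "Psi (c*A) (c*B) n = c^(n div 2) * Psi A B n"
proof (induction n rule: less_induct)
  case (less n)
  show ?case
  proof (cases n)
    case 0 then show ?thesis by simp
  next
    case (Suc n1)
    show ?thesis
    proof (cases n1)
      case 0 then show ?thesis using Suc by simp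
    next
      case (Suc k)
      have n: "n = Suc (Suc k)" using Suc \<open>n = Suc n1\<close> by simp
      have I1: "Psi (c*A) (c*B) (Suc k) = c^(Suc k div 2) * Psi A B (Suc k)"
        using less.IH[of "Suc k"] n by simp
      have I0: "Psi (c*A) (c*B) k = c^(k div 2) * Psi A B k"
        using less.IH[of k] n by simp
      show ?thesis
        unfolding n using I1 I0 by (cases "even k") (simp_all add: delta_def algebra_simps)
    qed
  qed
qed

lemma phi_scale: "Phi (c*A) (c*B) n = c^((n - 1) div 2) * Phi A B n"
proof (induction n rule: less_induct)
  case (less n)
  show ?case
  proof (cases n)
    case 0 then show ?thesis by simp
  next
    case (Suc n1)
    show ?thesis
    proof (cases n1)
      case 0 then show ?thesis using Suc by simp
    next
      case (Suc k)
      have n: "n = Suc (Suc k)" using Suc \<open>n = Suc n1\<close> by simp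
      have I1: "Phi (c*A) (c*B) (Suc k) = c^(k div 2) * Phi A B (Suc k)"
        using less.IH[of "Suc k"] n by simp
      have I0: "Phi (c*A) (c*B) k = c^((k - 1) div 2) * Phi A B k"
        using less.IH[of k] n by simp
      show ?thesis
      proof (cases "k = 0")
        case True then show ?thesis unfolding n by (simp add: delta_def)
      next
        case k0: False
        show ?thesis
        proof (cases "even k")
          case True
          then have e: "k div 2 = Suc ((k - 1) div 2)" using k0 by presburger
          show ?thesis unfolding n using I1 I0 True e by (simp add: delta_def algebra_simps)
        next
          case False
          then have e: "(k - 1) div 2 = k div 2" by presburger
          show ?thesis unfolding n using I1 I0 False e by (simp add: delta_def algebra_simps)
        qed
      qed
    qed
  qed
qed

lemma find_xy:
  fixes a b \<alpha> \<beta> z :: complex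
  assumes D: "\<beta>*a - \<alpha>*b \<noteq> 0" and h1: "(2*a-b) + (\<beta>-2*\<alpha>)*z \<noteq> 0"
    and h2: "-(b+2*a) + (\<beta>+2*\<alpha>)*z \<noteq> 0"
  shows "\<exists>x y. x+y \<noteq> 0 \<and> x-y \<noteq> 0 \<and> \<alpha>*x^2+\<beta>*x*y+\<alpha>*y^2 = 1 \<and> a*x^2+b*x*y+a*y^2 = z"
proof -
  define D where "D = \<beta>*a-\<alpha>*b"
  have D0: "D \<noteq> 0" using D by (simp add: D_def)
  define s where "s = (a - \<alpha>*z)/D"
  define t where "t = (\<beta>*z - b)/D"
  have e1: "t + 2*s = ((2*a-b) + (\<beta>-2*\<alpha>)*z)/D"
    by (simp add: s_def t_def add_divide_distrib[symmetric] algebra_simps)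
  have e2: "t - 2*s = (-(b+2*a) + (\<beta>+2*\<alpha>)*z)/D"
    by (simp add: s_def t_def diff_divide_distrib[symmetric] algebra_simps)
  define p where "p = csqrt (t + 2*s)"
  define q where "q = csqrt (t - 2*s)"
  have p2: "p^2 = t + 2*s" by (simp add: p_def)
  have q2: "q^2 = t - 2*s" by (simp add: q_def)
  have p0: "p \<noteq> 0" using p2 e1 h1 D0 by auto
  have q0: "q \<noteq> 0" using q2 e2 h2 D0 by auto
  define x where "x = (p+q)/2"
  define y where "y = (p-q)/2"
  have xy: "x*y = s"
  proof -
    have "x*y = (p^2 - q^2)/4" by (simp add: x_def y_def power2_eq_square algebra_simps)
    then show ?thesis using p2 q2 by simp
  qed
  have x2y2: "x^2+y^2 = t"
  proof -
    have "x^2+y^2 = (p^2 + q^2)/2" by (simp add: x_def y_def power2_eq_square field_simps)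
    then show ?thesis using p2 q2 by simp
  qed
  have L1: "\<alpha>*x^2+\<beta>*x*y+\<alpha>*y^2 = 1"
  proof -
    have "\<alpha>*x^2+\<beta>*x*y+\<alpha>*y^2 = \<alpha>*(x^2+y^2) + \<beta>*(x*y)" by (simp add: algebra_simps)
    also have "\<dots> = \<alpha>*t + \<beta>*s" by (simp add: xy x2y2)
    also have "\<dots> = (\<beta>*a-\<alpha>*b)/D" using D0 by (simp add: s_def t_def field_simps)
    also have "\<dots> = 1" using D0 by (simp add: D_def)
    finally show ?thesis .
  qed
  have L2: "a*x^2+b*x*y+a*y^2 = z"
  proof -
    have "a*x^2+b*x*y+a*y^2 = a*(x^2+y^2) + b*(x*y)" by (simp add: algebra_simps)
    also have "\<dots> = a*t + b*s" by (simp add: xy x2y2)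
    also have "\<dots> = (a*(\<beta>*z - b) + b*(a - \<alpha>*z))/D" by (simp add: s_def t_def add_divide_distrib)
    also have "a*(\<beta>*z - b) + b*(a - \<alpha>*z) = z*D" by (simp add: D_def algebra_simps)
    also have "z*D/D = z" using D0 by simp
    finally show ?thesis .
  qed
  have "x+y \<noteq> 0" using p0 by (simp add: x_def y_def add_divide_distrib[symmetric])
  moreover have "x-y \<noteq> 0" using q0 by (simp add: x_def y_def diff_divide_distrib[symmetric])
  ultimately show ?thesis using L1 L2 by blast
qed

lemma lin_finite: "p \<noteq> 0 \<or> q \<noteq> 0 \<Longrightarrow> finite {z::complex. p + q*z = 0}"
proof (cases "q = 0")
  case True
  assume "p \<noteq> 0 \<or> q \<noteq> 0"
  then show ?thesis using True by simp
next
  case False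
  have "z = -p/q" if "p + q*z = 0" for z
  proof -
    have "q*z = -p" using that by (metis add.commute eq_neg_iff_add_eq_0)
    then show ?thesis using False by (simp add: field_simps)
  qed
  then have "{z::complex. p + q*z = 0} \<subseteq> {-p/q}" by blast
  then show ?thesis using finite_subset by blast
qed

lemma the_coeff:
  fixes N :: "complex \<Rightarrow> complex \<Rightarrow> bool" and W G :: "complex \<Rightarrow> complex \<Rightarrow> complex"
    and a b \<alpha> \<beta> :: complex
  assumes D: "\<beta>*a - \<alpha>*b \<noteq> 0"
    and N: "\<And>x y. x+y \<noteq> 0 \<Longrightarrow> x-y \<noteq> 0 \<Longrightarrow> N x y"
    and hG: "hom m G"
    and rep: "\<And>x y. N x y \<Longrightarrow> W x y = G (\<alpha>*x^2+\<beta>*x*y+\<alpha>*y^2) (a*x^2+b*x*y+a*y^2)"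
  shows "(\<Sum>r=0..m. (THE c. (\<forall>r. m < r \<longrightarrow> c r = 0) \<and> (\<forall>x y. N x y \<longrightarrow> W x y
      = (\<Sum>r=0..m. c r * (\<alpha>*x^2+\<beta>*x*y+\<alpha>*y^2)^(m-r) * (a*x^2+b*x*y+a*y^2)^r))) r
       * \<xi>^(m-r) * \<eta>^r) = G \<xi> \<eta>"
proof -
  obtain c0 where c0z: "\<forall>r. m < r \<longrightarrow> c0 r = 0"
    and c0f: "\<forall>\<xi> \<eta>. G \<xi> \<eta> = (\<Sum>r=0..m. c0 r * \<xi> ^ (m - r) * \<eta> ^ r)"
    using hG unfolding hom_def by blast
  let ?Q = "\<lambda>c. (\<forall>r. m < r \<longrightarrow> c r = 0) \<and> (\<forall>x y. N x y \<longrightarrow> W x y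
      = (\<Sum>r=0..m. c r * (\<alpha>*x^2+\<beta>*x*y+\<alpha>*y^2)^(m-r) * (a*x^2+b*x*y+a*y^2)^r))"
  have Q0: "?Q c0"
  proof (intro conjI allI impI)
    show "c0 r = 0" if "m < r" for r using c0z that by blast
    fix x y assume "N x y"
    then show "W x y = (\<Sum>r=0..m. c0 r * (\<alpha>*x^2+\<beta>*x*y+\<alpha>*y^2)^(m-r) * (a*x^2+b*x*y+a*y^2)^r)"
      using rep c0f by simp
  qed
  have nz1: "2*a-b \<noteq> 0 \<or> \<beta>-2*\<alpha> \<noteq> 0"
  proof (rule ccontr)
    assume "\<not> ?thesis"
    then have h: "2*a-b = 0" "\<beta>-2*\<alpha> = 0" by auto
    have "\<beta>*a - \<alpha>*b = (\<beta>-2*\<alpha>)*a + \<alpha>*(2*a-b)" by (simp add: algebra_simps)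
    then show False using D h by simp
  qed
  have nz2: "-(b+2*a) \<noteq> 0 \<or> \<beta>+2*\<alpha> \<noteq> 0"
  proof (rule ccontr)
    assume "\<not> ?thesis"
    then have h: "b+2*a = 0" "\<beta>+2*\<alpha> = 0" by (simp_all only: de_Morgan_disj not_not neg_equal_0_iff_equal)
    have "\<beta>*a - \<alpha>*b = (\<beta>+2*\<alpha>)*a - \<alpha>*(b+2*a)" by (simp add: algebra_simps)
    then show False using D h by simp
  qed
  define S where "S = {z. (2*a-b) + (\<beta>-2*\<alpha>)*z = 0} \<union> {z. -(b+2*a) + (\<beta>+2*\<alpha>)*z = 0}"
  have finS: "finite S" unfolding S_def using lin_finite[OF nz1] lin_finite[OF nz2] by blast
  have uniq: "c = c0" if Q: "?Q c" for c
  proof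
    fix r
    show "c r = c0 r"
    proof (cases "m < r")
      case True then show ?thesis using Q c0z by simp
    next
      case False
      have "\<not> finite {z. (\<Sum>i\<le>m. (c i - c0 i) * z^i) = 0}"
      proof
        assume fin: "finite {z. (\<Sum>i\<le>m. (c i - c0 i) * z^i) = 0}"
        have "UNIV \<subseteq> {z. (\<Sum>i\<le>m. (c i - c0 i) * z^i) = 0} \<union> S"
        proof
          fix z :: complex
          assume "z \<in> UNIV"
          show "z \<in> {z. (\<Sum>i\<le>m. (c i - c0 i) * z^i) = 0} \<union> S"
          proof (cases "z \<in> S")
            case True then show ?thesis by blast
          next
            case False
            then have h1: "(2*a-b) + (\<beta>-2*\<alpha>)*z \<noteq> 0" and h2: "-(b+2*a) + (\<beta>+2*\<alpha>)*z \<noteq> 0"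
              unfolding S_def by auto
            obtain x y where xy: "x+y \<noteq> 0" "x-y \<noteq> 0" "\<alpha>*x^2+\<beta>*x*y+\<alpha>*y^2 = 1"
              "a*x^2+b*x*y+a*y^2 = z"
              using find_xy[OF D h1 h2] by blast
            have Nxy: "N x y" using N xy by blast
            have "W x y = (\<Sum>r=0..m. c r * (\<alpha>*x^2+\<beta>*x*y+\<alpha>*y^2)^(m-r) * (a*x^2+b*x*y+a*y^2)^r)"
              using Q Nxy by blast
            then have e1: "(\<Sum>r=0..m. c r * z^r) = W x y" unfolding xy(3,4) by simp
            have "W x y = (\<Sum>r=0..m. c0 r * (\<alpha>*x^2+\<beta>*x*y+\<alpha>*y^2)^(m-r) * (a*x^2+b*x*y+a*y^2)^r)"
              using Q0 Nxy by blast
            then have e2: "(\<Sum>r=0..m. c0 r * z^r) = W x y" unfolding xy(3,4) by simp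
            from e1 e2 have "(\<Sum>i\<le>m. (c i - c0 i) * z^i) = 0"
              by (simp add: atLeast0AtMost[symmetric] sum_subtractf left_diff_distrib)
            then show ?thesis by blast
          qed
        qed
        then have "finite (UNIV :: complex set)" using fin finS finite_subset by blast
        then show False using infinite_UNIV_char_0 by blast
      qed
      then have "\<not> (\<exists>i\<le>m. c i - c0 i \<noteq> 0)"
        using polyfun_finite_roots[where c="\<lambda>i. c i - c0 i" and n=m] by simp
      then show ?thesis using False by simp
    qed
  qed
  have "(THE c. ?Q c) = c0"
    by (rule the1_equality) (use Q0 uniq in blast)+
  then show ?thesis using c0f by simp
qed

lemma subst_forms:
  fixes a b \<alpha> \<beta> x y :: complex
  shows "a*(\<alpha>*x^2+\<beta>*x*y+\<alpha>*y^2) - \<alpha>*(a*x^2+b*x*y+a*y^2) = (\<beta>*a - \<alpha>*b)*(x*y)"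
    and "b*(\<alpha>*x^2+\<beta>*x*y+\<alpha>*y^2) - \<beta>*(a*x^2+b*x*y+a*y^2) = (\<beta>*a - \<alpha>*b)*(-(x^2+y^2))"
  by (simp_all add: algebra_simps power2_eq_square)

lemma rep_psi:
  fixes a b \<alpha> \<beta> x y :: complex
  assumes "(x+y)^delta n \<noteq> 0"
  shows "(\<beta>*a - \<alpha>*b)^(n div 2) * ((x^n+y^n)/(x+y)^delta n)
    = Psi (a*(\<alpha>*x^2+\<beta>*x*y+\<alpha>*y^2) - \<alpha>*(a*x^2+b*x*y+a*y^2))
          (b*(\<alpha>*x^2+\<beta>*x*y+\<alpha>*y^2) - \<beta>*(a*x^2+b*x*y+a*y^2)) n"
proof -
  have "Psi (x*y) (-(x^2+y^2)) n = (x^n+y^n)/(x+y)^delta n"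
    using psi_xy[of x y n] assms by (simp add: eq_divide_eq)
  then show ?thesis unfolding subst_forms psi_scale by simp
qed

lemma rep_phi:
  fixes a b \<alpha> \<beta> x y :: complex
  assumes "(x - y) * (x+y)^delta (n - 1) \<noteq> 0"
  shows "(\<beta>*a - \<alpha>*b)^((n - 1) div 2) * ((x^n - y^n)/((x - y) * (x+y)^delta (n - 1)))
    = Phi (a*(\<alpha>*x^2+\<beta>*x*y+\<alpha>*y^2) - \<alpha>*(a*x^2+b*x*y+a*y^2))
          (b*(\<alpha>*x^2+\<beta>*x*y+\<alpha>*y^2) - \<beta>*(a*x^2+b*x*y+a*y^2)) n"
proof -
  have "Phi (x*y) (-(x^2+y^2)) n = (x^n - y^n)/((x - y) * (x+y)^delta (n - 1))"
    using phi_xy[of x y n] assms by (simp add: eq_divide_eq mult.assoc)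
  then show ?thesis unfolding subst_forms phi_scale by simp
qed

theorem theorem10p2:
  fixes a b \<alpha> \<beta> \<eta> \<xi> :: complex and n :: nat
  assumes "\<beta>*a - \<alpha>*b \<noteq> 0" and "n \<ge> 1"
  shows "((\<Sum>r=0..n div 2. PsiC a b \<alpha> \<beta> n r * \<xi> ^ (n div 2 - r) * \<eta> ^ r)
           = Psi (a*\<xi> - \<alpha>*\<eta>) (b*\<xi> - \<beta>*\<eta>) n)
     \<and> ((\<Sum>r=0..(n - 1) div 2. PhiC a b \<alpha> \<beta> n r * \<xi> ^ ((n - 1) div 2 - r) * \<eta> ^ r)
           = Phi (a*\<xi> - \<alpha>*\<eta>) (b*\<xi> - \<beta>*\<eta>) n)"
proof
  show "(\<Sum>r=0..n div 2. PsiC a b \<alpha> \<beta> n r * \<xi> ^ (n div 2 - r) * \<eta> ^ r)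
           = Psi (a*\<xi> - \<alpha>*\<eta>) (b*\<xi> - \<beta>*\<eta>) n"
    unfolding PsiC_def
    by (rule the_coeff[where N="\<lambda>x y. (x+y)^delta n \<noteq> 0"
          and W="\<lambda>x y. (\<beta>*a - \<alpha>*b)^(n div 2) * ((x^n+y^n)/(x+y)^delta n)"
          and G="\<lambda>\<xi> \<eta>. Psi (a*\<xi> - \<alpha>*\<eta>) (b*\<xi> - \<beta>*\<eta>) n"])
       (use assms(1) psi_hom rep_psi in auto)
  show "(\<Sum>r=0..(n - 1) div 2. PhiC a b \<alpha> \<beta> n r * \<xi> ^ ((n - 1) div 2 - r) * \<eta> ^ r)
           = Phi (a*\<xi> - \<alpha>*\<eta>) (b*\<xi> - \<beta>*\<eta>) n"
    unfolding PhiC_def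
    by (rule the_coeff[where N="\<lambda>x y. (x - y) * (x+y)^delta (n - 1) \<noteq> 0"
          and W="\<lambda>x y. (\<beta>*a - \<alpha>*b)^((n - 1) div 2) * ((x^n - y^n)/((x - y) * (x+y)^delta (n - 1)))"
          and G="\<lambda>\<xi> \<eta>. Phi (a*\<xi> - \<alpha>*\<eta>) (b*\<xi> - \<beta>*\<eta>) n"])
       (use assms(1) phi_hom rep_phi in auto)
qed

end
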